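(* Let $n\ge 1$ and let $\mathbb{X}:=\{x\in[0,1]^n \mid \sum_{i=1}^n x_i=1\}$ be the standard simplex. For $p\in\mathbb{R}^n$ let $\mathscr{M}(p):=\arg\max_{x\in\mathbb{X}} p^\top x$. Fix any $q\in\mathbb{R}^n$ and any $\bar{x}\in\mathscr{M}(q)$. Then the only vector $x\in\mathbb{X}$ satisfying $$x\in\mathscr{M}(\bar{x}-x+q)$$ is $x=\bar{x}$.
   Context: $\mathscr{M}:\mathbb{R}^n\to 2^{\mathbb{X}}$ is the best response map, i.e. $\mathscr{M}(p)$ is the set of maximizers of the linear function $x\mapsto p^\top x$ over the simplex $\mathbb{X}$. *)

theory Defs
  imports "HOL-Analysis.Analysis"
begin

definition std_simplex :: "(real ^ 'n) set" where
  "std_simplex = {x. (\<forall>i. 0 \<le> x $ i \<and> x $ i \<le> 1) \<and> (\<Sum>i\<in>UNIV. x $ i) = 1}"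

definition best_response :: "real ^ 'n \<Rightarrow> (real ^ 'n) set" where
  "best_response p = {x \<in> std_simplex. \<forall>y \<in> std_simplex. p \<bullet> y \<le> p \<bullet> x}"

end

theory Submission
  imports Defs
begin

theorem lemma1:
  fixes q xbar :: "real ^ 'n"
  assumes "xbar \<in> best_response q"
  shows "{x \<in> std_simplex. x \<in> best_response (xbar - x + q)} = {xbar}"
proof
  have xs: "xbar \<in> std_simplex" and qm: "\<forall>y\<in>std_simplex. q \<bullet> y \<le> q \<bullet> xbar"
    using assms by (auto simp: best_response_def)
  show "{xbar} \<subseteq> {x \<in> std_simplex. x \<in> best_response (xbar - x + q)}"
    using assms xs by simp
  show "{x \<in> std_simplex. x \<in> best_response (xbar - x + q)} \<subseteq> {xbar}"
  proof
    fix x assume "x \<in> {x \<in> std_simplex. x \<in> best_response (xbar - x + q)}"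
    hence x: "x \<in> std_simplex" and h: "(xbar - x + q) \<bullet> xbar \<le> (xbar - x + q) \<bullet> x"
      using xs by (auto simp: best_response_def)
    have "q \<bullet> x \<le> q \<bullet> xbar" using qm x by blast
    hence "(xbar - x) \<bullet> (xbar - x) \<le> 0" using h
      by (simp add: algebra_simps inner_diff_left inner_diff_right inner_add_left inner_add_right inner_commute)
    hence "xbar - x = 0" by (metis inner_eq_zero_iff inner_ge_zero order_antisym)
    thus "x \<in> {xbar}" by simp
  qed
qed

end
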